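(* Let $D\in\mathbb{R}^{L\times N}$ have unit-norm columns, $L<N$, with every set of at most $k$ columns linearly independent, and let $\mu=\max_{1\le i\ne j\le N}|d_i^Td_j|$ be its coherence. Let $x\in\mathbb{R}^N$ be nonzero with at most $k$ nonzero entries, let $x_{\min}$ be the smallest magnitude of a nonzero entry of $x$, and let $y=Dx+w$ with $w\sim N(0,\sigma^2 I_L)$. Suppose that for some $\alpha>1$, $$x_{\min}(1-(2k-1)\mu)\ge 2\sigma\sqrt{2\alpha\log N}.$$ Then, with probability exceeding $$1-\frac{0.8/\sqrt2}{N^{\alpha-1}\sqrt{\alpha\log N}},$$ the OMP algorithm selects every index of the support of $x$ and $$\|\hat x_{\mathrm{OMP}}-x\|_2^2\le\frac{2\alpha}{(1-(k-1)\mu)^2}\,k\,\sigma^2\log N.$$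
   Context: $\log$ is the natural logarithm; $d_1,\dots,d_N$ are the columns of $D$. OMP algorithm: set $r^0=y$. For $\ell=1,\dots,k$: choose $i_\ell\in\arg\max_{1\le i\le N}|d_i^Tr^{\ell-1}|$ (ties arbitrary); let $x^\ell$ minimize $\|y-D\tilde x\|_2$ over vectors $\tilde x$ whose nonzero entries lie in $\{i_1,\dots,i_\ell\}$; set $r^\ell=y-Dx^\ell$. Output $\hat x_{\mathrm{OMP}}=x^k$. *)

theory Defs
  imports "HOL-Probability.Probability"
begin

definition coherence :: "real^'n^'l \<Rightarrow> real" where
  "coherence D = Max {\<bar>column i D \<bullet> column j D\<bar> | i j. i \<noteq> j}"

definition cols_indep_upto :: "real^'n^'l \<Rightarrow> nat \<Rightarrow> bool" where
  "cols_indep_upto D k \<longleftrightarrow>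
     (\<forall>S :: 'n set. card S \<le> k \<longrightarrow>
        inj_on (\<lambda>i. column i D) S \<and> independent ((\<lambda>i. column i D) ` S))"

definition xmin :: "real^'n \<Rightarrow> real" where
  "xmin x = Min {\<bar>x $ j\<bar> | j. x $ j \<noteq> 0}"

text \<open>A run of OMP with k iterations on data y: idx l is the index chosen at step l
  (l = 1..k, ties arbitrary), xs l is the least-squares estimate x^l on the chosen
  support; xs 0 = 0 so that the residual r^0 = y - D xs 0 = y. The output is xs k.\<close>
definition omp_run :: "real^'n^'l \<Rightarrow> real^'l \<Rightarrow> nat \<Rightarrow> (nat \<Rightarrow> 'n) \<Rightarrow> (nat \<Rightarrow> real^'n) \<Rightarrow> bool" where
  "omp_run D y k idx xs \<longleftrightarrow>
     xs 0 = 0 \<and>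
     (\<forall>l\<in>{1..k}.
        (\<forall>i. \<bar>column i D \<bullet> (y - D *v xs (l - 1))\<bar>
               \<le> \<bar>column (idx l) D \<bullet> (y - D *v xs (l - 1))\<bar>) \<and>
        (\<forall>j. j \<notin> idx ` {1..l} \<longrightarrow> xs l $ j = 0) \<and>
        (\<forall>z :: real^'n. (\<forall>j. j \<notin> idx ` {1..l} \<longrightarrow> z $ j = 0) \<longrightarrow>
            norm (y - D *v xs l) \<le> norm (y - D *v z)))"

end

theory Submission
  imports Defs "HOL-Real_Asymp.Real_Asymp"
begin


lemma gauss_half:
  fixes \<sigma> \<tau> :: real
  assumes s: "\<sigma> > 0" and t: "\<tau> > 0"
  shows "(\<integral>\<^sup>+x. ennreal (x * normal_density 0 \<sigma> x / \<tau>) * indicator {\<tau>..} x \<partial>lborel)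
         = ennreal (\<sigma>\<^sup>2 * normal_density 0 \<sigma> \<tau> / \<tau>)"
proof -
  have "(\<integral>\<^sup>+x. ennreal (x * normal_density 0 \<sigma> x / \<tau>) * indicator {\<tau>..} x \<partial>lborel)
       = ennreal (0 - (- \<sigma>\<^sup>2 * normal_density 0 \<sigma> \<tau> / \<tau>))"
  proof (rule nn_integral_FTC_atLeast[where F="\<lambda>x. - \<sigma>\<^sup>2 * normal_density 0 \<sigma> x / \<tau>"])
    show "(\<lambda>x. x * normal_density 0 \<sigma> x / \<tau>) \<in> borel_measurable borel" by measurable
    fix x :: real assume "\<tau> \<le> x"
    then show "0 \<le> x * normal_density 0 \<sigma> x / \<tau>" using t by simp
    show "((\<lambda>x. - \<sigma>\<^sup>2 * normal_density 0 \<sigma> x / \<tau>) has_real_derivative x * normal_density 0 \<sigma> x / \<tau>) (at x)"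
      unfolding normal_density_def
      using s t by (auto intro!: derivative_eq_intros simp: field_simps power2_eq_square)
  next
    show "((\<lambda>x. - \<sigma>\<^sup>2 * normal_density 0 \<sigma> x / \<tau>) \<longlongrightarrow> 0) at_top"
    proof -
      have "filterlim (\<lambda>x::real. - (x - 0)\<^sup>2 / (2 * \<sigma>\<^sup>2)) at_bot at_top"
        using s by real_asymp
      then have "((\<lambda>x. exp (- (x - 0)\<^sup>2 / (2 * \<sigma>\<^sup>2))) \<longlongrightarrow> 0) at_top"
        by (rule filterlim_compose[OF exp_at_bot])
      then have "((\<lambda>x. - \<sigma>\<^sup>2 * (1 / sqrt (2 * pi * \<sigma>\<^sup>2)) * exp (- (x - 0)\<^sup>2 / (2 * \<sigma>\<^sup>2)) / \<tau>)
           \<longlongrightarrow> - \<sigma>\<^sup>2 * (1 / sqrt (2 * pi * \<sigma>\<^sup>2)) * 0 / \<tau>) at_top"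
        using t by (intro tendsto_intros) auto
      then show ?thesis unfolding normal_density_def by (simp add: mult.assoc)
    qed
  qed
  then show ?thesis by simp
qed

lemma gauss_tail:
  fixes \<sigma> \<tau> :: real
  assumes s: "\<sigma> > 0" and t: "\<tau> > 0"
  shows "(\<integral>\<^sup>+x. ennreal (normal_density 0 \<sigma> x) * indicator {x. \<tau> \<le> \<bar>x\<bar>} x \<partial>lborel)
         \<le> ennreal (2 * (\<sigma>\<^sup>2 * normal_density 0 \<sigma> \<tau> / \<tau>))"
proof -
  define k where "k = (\<lambda>x. ennreal (x * normal_density 0 \<sigma> x / \<tau>) * indicator {\<tau>..} x)"
  have km[measurable]: "k \<in> borel_measurable borel" unfolding k_def by measurable
  have sym: "normal_density 0 \<sigma> (- x) = normal_density 0 \<sigma> x" for x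
    unfolding normal_density_def by simp
  have pt: "ennreal (normal_density 0 \<sigma> x) * indicator {x. \<tau> \<le> \<bar>x\<bar>} x \<le> k x + k (- x)" for x
  proof (cases "\<tau> \<le> \<bar>x\<bar>")
    case False then show ?thesis by simp
  next
    case True
    show ?thesis
    proof (cases "x \<ge> 0")
      case True
      with \<open>\<tau> \<le> \<bar>x\<bar>\<close> have "\<tau> \<le> x" by simp
      have "normal_density 0 \<sigma> x \<le> x * normal_density 0 \<sigma> x / \<tau>"
        using \<open>\<tau> \<le> x\<close> t by (simp add: field_simps mult_right_mono)
      then have "ennreal (normal_density 0 \<sigma> x) \<le> k x"
        unfolding k_def using \<open>\<tau> \<le> x\<close> by (simp add: ennreal_leI)
      then show ?thesis using \<open>\<tau> \<le> \<bar>x\<bar>\<close>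
        by (simp add: add_increasing2)
    next
      case False
      with \<open>\<tau> \<le> \<bar>x\<bar>\<close> have "\<tau> \<le> - x" by simp
      have "normal_density 0 \<sigma> x \<le> (- x) * normal_density 0 \<sigma> (- x) / \<tau>"
        using \<open>\<tau> \<le> - x\<close> t sym[of x] mult_right_mono[OF \<open>\<tau> \<le> - x\<close> normal_density_nonneg[of 0 \<sigma> x]]
        by (simp add: field_simps)
      then have "ennreal (normal_density 0 \<sigma> x) \<le> k (- x)"
        unfolding k_def using \<open>\<tau> \<le> - x\<close> by (simp add: ennreal_leI)
      then show ?thesis using \<open>\<tau> \<le> \<bar>x\<bar>\<close>
        by (simp add: add_increasing)
    qed
  qed
  have "(\<integral>\<^sup>+x. ennreal (normal_density 0 \<sigma> x) * indicator {x. \<tau> \<le> \<bar>x\<bar>} x \<partial>lborel)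
        \<le> (\<integral>\<^sup>+x. k x + k (- x) \<partial>lborel)"
    by (intro nn_integral_mono pt)
  also have "\<dots> = (\<integral>\<^sup>+x. k x \<partial>lborel) + (\<integral>\<^sup>+x. k (- x) \<partial>lborel)"
    by (rule nn_integral_add) auto
  also have "(\<integral>\<^sup>+x. k (- x) \<partial>lborel) = (\<integral>\<^sup>+x. k x \<partial>lborel)"
    using nn_integral_real_affine[OF km, of "-1" 0] by simp
  also have "(\<integral>\<^sup>+x. k x \<partial>lborel) = ennreal (\<sigma>\<^sup>2 * normal_density 0 \<sigma> \<tau> / \<tau>)"
    unfolding k_def by (rule gauss_half[OF s t])
  also have "ennreal (\<sigma>\<^sup>2 * normal_density 0 \<sigma> \<tau> / \<tau>) + ennreal (\<sigma>\<^sup>2 * normal_density 0 \<sigma> \<tau> / \<tau>)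
     = ennreal (2 * (\<sigma>\<^sup>2 * normal_density 0 \<sigma> \<tau> / \<tau>))"
    using t by (simp add: ennreal_plus[symmetric] del: ennreal_plus)
  finally show ?thesis .
qed

lemma inner_normal:
  fixes W :: "'a \<Rightarrow> real^'l" and c :: "real^'l"
  assumes PS: "prob_space M" and s: "\<sigma> > 0"
    and W_indep: "prob_space.indep_vars M (\<lambda>_. borel) (\<lambda>i \<omega>. W \<omega> $ i) UNIV"
    and W_normal: "\<forall>i. distributed M lborel (\<lambda>\<omega>. W \<omega> $ i) (normal_density 0 \<sigma>)"
    and c: "norm c = 1"
  shows "distributed M lborel (\<lambda>\<omega>. c \<bullet> W \<omega>) (normal_density 0 \<sigma>)"
proof -
  interpret prob_space M by (rule PS)
  define I where "I = {l. c $ l \<noteq> 0}"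
  have fin: "finite I" by simp
  have sumsq: "(\<Sum>l\<in>I. (c $ l)\<^sup>2) = 1"
  proof -
    have "(\<Sum>l\<in>I. (c $ l)\<^sup>2) = (\<Sum>l\<in>UNIV. (c $ l)\<^sup>2)"
      by (rule sum.mono_neutral_left) (auto simp: I_def)
    also have "\<dots> = c \<bullet> c" by (simp add: inner_vec_def power2_eq_square)
    also have "\<dots> = (norm c)\<^sup>2" by (simp add: power2_norm_eq_inner)
    finally show ?thesis using c by simp
  qed
  then have ne: "I \<noteq> {}" by auto
  have ind: "indep_vars (\<lambda>_. borel) (\<lambda>l \<omega>. c $ l * W \<omega> $ l) I"
    using indep_vars_subset[OF indep_vars_compose2[OF W_indep, of "\<lambda>l x. c $ l * x" "\<lambda>_. borel"]]
    by auto
  have dl: "distributed M lborel (\<lambda>\<omega>. c $ l * W \<omega> $ l) (normal_density 0 (\<bar>c $ l\<bar> * \<sigma>))"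
    if "l \<in> I" for l
    using normal_density_affine[OF W_normal[rule_format, of l] s, of "c $ l" 0] that
    by (simp add: I_def)
  have "distributed M lborel (\<lambda>x. \<Sum>l\<in>I. c $ l * W x $ l)
        (normal_density (\<Sum>l\<in>I. 0) (sqrt (\<Sum>l\<in>I. (\<bar>c $ l\<bar> * \<sigma>)\<^sup>2)))"
    by (rule sum_indep_normal[OF fin ne ind]) (use s in \<open>auto simp: I_def intro: dl\<close>)
  moreover have "(\<Sum>l\<in>I. (\<bar>c $ l\<bar> * \<sigma>)\<^sup>2) = \<sigma>\<^sup>2"
    using sumsq by (simp add: power_mult_distrib sum_distrib_right[symmetric])
  moreover have "(\<lambda>x. \<Sum>l\<in>I. c $ l * W x $ l) = (\<lambda>\<omega>. c \<bullet> W \<omega>)"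
  proof
    fix x
    have "(\<Sum>l\<in>I. c $ l * W x $ l) = (\<Sum>l\<in>UNIV. c $ l * W x $ l)"
      by (rule sum.mono_neutral_left) (auto simp: I_def)
    then show "(\<Sum>l\<in>I. c $ l * W x $ l) = c \<bullet> W x" by (simp add: inner_vec_def)
  qed
  ultimately show ?thesis using s by simp
qed


lemma Dv_sum: "(D::real^'n^'l) *v z = (\<Sum>j\<in>UNIV. z $ j *\<^sub>R column j D)"
  by (simp add: matrix_mult_sum scalar_mult_eq_scaleR)

lemma inner_Dv_supp:
  assumes "\<forall>j. j \<notin> S \<longrightarrow> z $ j = 0"
  shows "c \<bullet> ((D::real^'n^'l) *v z) = (\<Sum>j\<in>S. z $ j * (c \<bullet> column j D))"
proof -
  have "c \<bullet> (D *v z) = (\<Sum>j\<in>UNIV. z $ j * (c \<bullet> column j D))"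
    by (simp add: Dv_sum inner_sum_right)
  also have "\<dots> = (\<Sum>j\<in>S. z $ j * (c \<bullet> column j D))"
    by (rule sum.mono_neutral_right) (use assms in auto)
  finally show ?thesis .
qed

lemma col_self: "norm (column i (D::real^'n^'l)) = 1 \<Longrightarrow> column i D \<bullet> column i D = 1"
  by (metis power2_norm_eq_inner power_one)

lemma L1:
  fixes D :: "real^'n^'l"
  assumes unit: "\<forall>i. norm (column i D) = 1"
    and coh: "\<forall>i j. i \<noteq> j \<longrightarrow> \<bar>column i D \<bullet> column j D\<bar> \<le> \<mu>"
    and supp: "\<forall>j. j \<notin> S \<longrightarrow> e $ j = 0"
  shows "\<bar>column i D \<bullet> (D *v e) - e $ i\<bar> \<le> \<mu> * (\<Sum>j\<in>S-{i}. \<bar>e $ j\<bar>)"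
proof -
  have supp2: "\<forall>j. j \<notin> insert i S \<longrightarrow> e $ j = 0" using supp by auto
  have "column i D \<bullet> (D *v e) = (\<Sum>j\<in>insert i S. e $ j * (column i D \<bullet> column j D))"
    by (rule inner_Dv_supp[OF supp2])
  also have "\<dots> = e $ i + (\<Sum>j\<in>S-{i}. e $ j * (column i D \<bullet> column j D))"
    using col_self[of i D] unit by (simp add: sum.insert_remove)
  finally have eq: "column i D \<bullet> (D *v e) - e $ i = (\<Sum>j\<in>S-{i}. e $ j * (column i D \<bullet> column j D))"
    by simp
  have "\<bar>\<Sum>j\<in>S-{i}. e $ j * (column i D \<bullet> column j D)\<bar> \<le> (\<Sum>j\<in>S-{i}. \<bar>e $ j * (column i D \<bullet> column j D)\<bar>)"
    by (rule sum_abs)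
  also have "\<dots> \<le> (\<Sum>j\<in>S-{i}. \<bar>e $ j\<bar> * \<mu>)"
    by (rule sum_mono) (use coh in \<open>auto simp: abs_mult intro: mult_left_mono\<close>)
  finally show ?thesis using eq by (simp add: sum_distrib_left mult.commute)
qed

lemma ortho:
  fixes D :: "real^'n^'l"
  assumes unit: "\<forall>i. norm (column i D) = 1"
    and supp: "\<forall>j. j \<notin> S \<longrightarrow> z $ j = 0"
    and opt: "\<forall>z' :: real^'n. (\<forall>j. j \<notin> S \<longrightarrow> z' $ j = 0) \<longrightarrow> norm (y - D *v z) \<le> norm (y - D *v z')"
    and i: "i \<in> S"
  shows "column i D \<bullet> (y - D *v z) = 0"
proof -
  define r where "r = y - D *v z"
  define a where "a = column i D \<bullet> r"
  define z' where "z' = z + a *\<^sub>R axis i 1"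
  have "\<forall>j. j \<notin> S \<longrightarrow> z' $ j = 0" using supp i by (auto simp: z'_def axis_def)
  with opt have le: "norm r \<le> norm (y - D *v z')" unfolding r_def by blast
  have "y - D *v z' = r - a *\<^sub>R column i D"
    by (simp add: z'_def r_def matrix_vector_right_distrib matrix_vector_mult_scaleR matrix_vector_mult_basis)
  with le have "(norm r)\<^sup>2 \<le> (norm (r - a *\<^sub>R column i D))\<^sup>2"
    by (simp add: power_mono)
  also have "\<dots> = (norm r)\<^sup>2 - 2 * a * a + a * a * (column i D \<bullet> column i D)"
    by (simp add: power2_norm_eq_inner inner_diff_left inner_diff_right a_def inner_commute algebra_simps)
  finally have "a * a \<le> 0" using col_self[of i D] unit by simp
  then have "a = 0" by (metis mult_eq_0_iff not_square_less_zero order_le_less)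
  then show ?thesis by (simp add: a_def r_def)
qed

lemma gram:
  fixes D :: "real^'n^'l"
  assumes unit: "\<forall>i. norm (column i D) = 1"
    and coh: "\<forall>i j. i \<noteq> j \<longrightarrow> \<bar>column i D \<bullet> column j D\<bar> \<le> \<mu>"
    and mu0: "0 \<le> \<mu>"
    and supp: "\<forall>j. j \<notin> S \<longrightarrow> e $ j = 0"
  shows "(1 - (real (card S) - 1) * \<mu>) * (\<Sum>j\<in>S. (e $ j)\<^sup>2) \<le> (D *v e) \<bullet> (D *v e)"
proof -
  define n where "n = (\<Sum>j\<in>S. (e $ j)\<^sup>2)"
  define s where "s = (\<Sum>j\<in>S. \<bar>e $ j\<bar>)"
  have fin: "finite S" by simp
  have "(D *v e) \<bullet> (D *v e) = (\<Sum>i\<in>S. e $ i * ((D *v e) \<bullet> column i D))"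
    by (rule inner_Dv_supp[OF supp])
  also have "\<dots> \<ge> (\<Sum>i\<in>S. (e $ i)\<^sup>2 - \<mu> * (\<bar>e $ i\<bar> * (s - \<bar>e $ i\<bar>)))"
  proof (rule sum_mono)
    fix i assume iS: "i \<in> S"
    have T: "(\<Sum>j\<in>S-{i}. \<bar>e $ j\<bar>) = s - \<bar>e $ i\<bar>"
      unfolding s_def using iS fin by (simp add: sum_diff1)
    have b: "\<bar>column i D \<bullet> (D *v e) - e $ i\<bar> \<le> \<mu> * (s - \<bar>e $ i\<bar>)"
      using L1[OF unit coh supp, of i] T by simp
    have "\<bar>e $ i * (column i D \<bullet> (D *v e) - e $ i)\<bar> \<le> \<bar>e $ i\<bar> * (\<mu> * (s - \<bar>e $ i\<bar>))"
      unfolding abs_mult by (rule mult_left_mono[OF b]) simp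
    then have "e $ i * (column i D \<bullet> (D *v e) - e $ i) \<ge> - (\<bar>e $ i\<bar> * (\<mu> * (s - \<bar>e $ i\<bar>)))"
      by linarith
    then show "(e $ i)\<^sup>2 - \<mu> * (\<bar>e $ i\<bar> * (s - \<bar>e $ i\<bar>)) \<le> e $ i * ((D *v e) \<bullet> column i D)"
      by (simp add: inner_commute algebra_simps power2_eq_square)
  qed
  also have "(\<Sum>i\<in>S. (e $ i)\<^sup>2 - \<mu> * (\<bar>e $ i\<bar> * (s - \<bar>e $ i\<bar>))) = n - \<mu> * (s * s - n)"
  proof -
    have "(\<Sum>i\<in>S. \<bar>e $ i\<bar> * (s - \<bar>e $ i\<bar>)) = s * s - n"
      by (simp add: n_def s_def algebra_simps sum_subtractf sum_distrib_left sum_distrib_right power2_eq_square)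
    then show ?thesis
      by (simp add: n_def sum_subtractf sum_distrib_left[symmetric])
  qed
  finally have A: "n - \<mu> * (s * s - n) \<le> (D *v e) \<bullet> (D *v e)" .
  have "s\<^sup>2 \<le> (\<Sum>j\<in>S. \<bar>e $ j\<bar>\<^sup>2) * card S"
    unfolding s_def by (rule sum_squared_le_sum_of_squares)
  then have "s * s \<le> n * card S" by (simp add: n_def power2_eq_square)
  then have "\<mu> * (s * s - n) \<le> \<mu> * (n * card S - n)" using mu0 by (simp add: mult_left_mono)
  with A show ?thesis by (simp add: n_def[symmetric] algebra_simps)
qed

lemma omp_det:
  fixes D :: "real^'n^'l" and x :: "real^'n" and w :: "real^'l"
  assumes unit: "\<forall>i. norm (column i D) = 1"
    and coh: "\<forall>i j. i \<noteq> j \<longrightarrow> \<bar>column i D \<bullet> column j D\<bar> \<le> \<mu>"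
    and mu0: "0 \<le> \<mu>"
    and k1: "1 \<le> k"
    and cpos: "1 - (2 * real k - 1) * \<mu> > 0"
    and sparse: "card {j. x $ j \<noteq> 0} \<le> k"
    and xm: "\<forall>j. x $ j \<noteq> 0 \<longrightarrow> xm \<le> \<bar>x $ j\<bar>"
    and tau: "\<tau> > 0"
    and wsmall: "\<forall>i. \<bar>column i D \<bullet> w\<bar> < \<tau>"
    and cond: "xm * (1 - (2 * real k - 1) * \<mu>) \<ge> 2 * \<tau>"
    and run: "omp_run D (D *v x + w) k idx xs"
  shows "{j. x $ j \<noteq> 0} \<subseteq> idx ` {1..k} \<and>
         (norm (xs k - x))\<^sup>2 \<le> real k * \<tau>\<^sup>2 / (1 - (real k - 1) * \<mu>)\<^sup>2"
proof -
  define y where "y = D *v x + w"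
  define \<Lambda> where "\<Lambda> = {j. x $ j \<noteq> 0}"
  define S where "S = (\<lambda>l. idx ` {1..l})"
  have finL: "finite \<Lambda>" by simp
  have xs0: "xs 0 = 0"
    and choose: "\<And>l i. l \<in> {1..k} \<Longrightarrow> \<bar>column i D \<bullet> (y - D *v xs (l - 1))\<bar>
               \<le> \<bar>column (idx l) D \<bullet> (y - D *v xs (l - 1))\<bar>"
    and suppl: "\<And>l. l \<in> {1..k} \<Longrightarrow> \<forall>j. j \<notin> S l \<longrightarrow> xs l $ j = 0"
    and optl: "\<And>l. l \<in> {1..k} \<Longrightarrow> \<forall>z :: real^'n. (\<forall>j. j \<notin> S l \<longrightarrow> z $ j = 0) \<longrightarrow>
            norm (y - D *v xs l) \<le> norm (y - D *v z)"
    using run unfolding omp_run_def y_def S_def by blast+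
  have supp: "\<forall>j. j \<notin> S l \<longrightarrow> xs l $ j = 0" if "l \<le> k" for l
  proof (cases "l = 0")
    case True then show ?thesis by (simp add: xs0)
  next
    case False then show ?thesis using suppl[of l] that by simp
  qed
  have orth: "column i D \<bullet> (y - D *v xs l) = 0" if "l \<le> k" "i \<in> S l" for l i
  proof (cases "l = 0")
    case True then show ?thesis using that by (simp add: S_def)
  next
    case False
    then show ?thesis using ortho[OF unit suppl[of l] optl[of l] that(2)] that by simp
  qed
  have step: "idx l \<in> \<Lambda> - S (l - 1)"
    if l: "l \<in> {1..k}" and sub: "S (l - 1) \<subseteq> \<Lambda>" and nsub: "\<not> \<Lambda> \<subseteq> S (l - 1)" for l
  proof -
    define u where "u = x - xs (l - 1)"
    define r where "r = y - D *v xs (l - 1)"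
    have lk: "l - 1 \<le> k" using l by auto
    have suppu: "\<forall>j. j \<notin> \<Lambda> \<longrightarrow> u $ j = 0"
      using supp[OF lk] sub unfolding u_def \<Lambda>_def by auto
    have r_eq: "r = D *v u + w"
      by (simp add: r_def y_def u_def matrix_vector_mult_diff_distrib)
    obtain j0 where j0: "j0 \<in> \<Lambda>" "j0 \<notin> S (l - 1)" using nsub by auto
    have LN: "\<Lambda> \<noteq> {}" using j0 by auto
    define m where "m = Max ((\<lambda>j. \<bar>u $ j\<bar>) ` \<Lambda>)"
    have m_ge: "\<bar>u $ j\<bar> \<le> m" if "j \<in> \<Lambda>" for j
      unfolding m_def using that finL by (intro Max_ge) auto
    obtain i0 where i0: "i0 \<in> \<Lambda>" "\<bar>u $ i0\<bar> = m"
    proof -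
      have "m \<in> (\<lambda>j. \<bar>u $ j\<bar>) ` \<Lambda>" unfolding m_def using finL LN by (intro Max_in) auto
      then show ?thesis using that by auto
    qed
    have uj0: "u $ j0 = x $ j0" using supp[OF lk] j0 by (simp add: u_def)
    have "xm \<le> \<bar>x $ j0\<bar>" using xm j0 by (simp add: \<Lambda>_def)
    then have m_xm: "xm \<le> m" using m_ge[OF j0(1)] uj0 by simp
    have cardL: "card \<Lambda> \<le> k" using sparse by (simp add: \<Lambda>_def)
    have m0: "0 \<le> m" using m_ge[OF i0(1)] by simp
    have s1: "(\<Sum>j\<in>\<Lambda>-{i0}. \<bar>u $ j\<bar>) \<le> (real k - 1) * m"
    proof -
      have "(\<Sum>j\<in>\<Lambda>-{i0}. \<bar>u $ j\<bar>) \<le> of_nat (card (\<Lambda>-{i0})) * m"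
        by (rule sum_bounded_above) (auto intro: m_ge)
      moreover have "card (\<Lambda>-{i0}) = card \<Lambda> - 1" using i0 finL by simp
      moreover have "real (card \<Lambda> - 1) \<le> real k - 1" using cardL LN finL
        by (simp add: of_nat_diff card_gt_0_iff Suc_le_eq)
      ultimately show ?thesis using m0 mult_right_mono[of "real (card \<Lambda> - 1)" "real k - 1" m]
        by simp
    qed
    have lo: "\<bar>column i0 D \<bullet> (D *v u)\<bar> \<ge> m - \<mu> * ((real k - 1) * m)"
    proof -
      have "\<bar>column i0 D \<bullet> (D *v u) - u $ i0\<bar> \<le> \<mu> * ((real k - 1) * m)"
        using L1[OF unit coh suppu, of i0] s1 mu0 by (meson mult_left_mono order_trans)
      then show ?thesis using i0(2) by linarith
    qed
    have hi: "\<bar>column j D \<bullet> (D *v u)\<bar> \<le> \<mu> * (real k * m)" if "j \<notin> \<Lambda>" for j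
    proof -
      have "(\<Sum>j'\<in>\<Lambda>-{j}. \<bar>u $ j'\<bar>) = (\<Sum>j'\<in>\<Lambda>. \<bar>u $ j'\<bar>)" using that by simp
      also have "\<dots> \<le> of_nat (card \<Lambda>) * m"
        by (rule sum_bounded_above) (auto intro: m_ge)
      also have "\<dots> \<le> real k * m" using cardL m0 by (simp add: mult_right_mono)
      finally have "(\<Sum>j'\<in>\<Lambda>-{j}. \<bar>u $ j'\<bar>) \<le> real k * m" .
      then have "\<bar>column j D \<bullet> (D *v u) - u $ j\<bar> \<le> \<mu> * (real k * m)"
        using L1[OF unit coh suppu, of j] mu0 by (meson mult_left_mono order_trans)
      then show ?thesis using suppu that by simp
    qed
    have key: "m - \<mu> * ((real k - 1) * m) - \<tau> \<ge> \<mu> * (real k * m) + \<tau>"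
    proof -
      have "xm * (1 - (2 * real k - 1) * \<mu>) \<le> m * (1 - (2 * real k - 1) * \<mu>)"
        using m_xm cpos by (simp add: mult_right_mono)
      with cond show ?thesis by (simp add: algebra_simps)
    qed
    have ri0: "\<bar>column i0 D \<bullet> r\<bar> > m - \<mu> * ((real k - 1) * m) - \<tau>"
      using lo wsmall[rule_format, of i0] unfolding r_eq inner_add_right by linarith
    have rj: "\<bar>column j D \<bullet> r\<bar> < \<mu> * (real k * m) + \<tau>" if "j \<notin> \<Lambda>" for j
      using hi[OF that] wsmall[rule_format, of j] unfolding r_eq inner_add_right by linarith
    have ch: "\<bar>column i0 D \<bullet> r\<bar> \<le> \<bar>column (idx l) D \<bullet> r\<bar>"
      using choose[OF l] unfolding r_def by blast
    have in\<Lambda>: "idx l \<in> \<Lambda>"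
    proof (rule ccontr)
      assume "idx l \<notin> \<Lambda>"
      from rj[OF this] ri0 ch key show False by linarith
    qed
    have "\<mu> * (real k * m) \<ge> 0" using mu0 m0 by simp
    then have "\<bar>column (idx l) D \<bullet> r\<bar> > 0" using ri0 ch key tau by linarith
    then have "idx l \<notin> S (l - 1)" using orth[OF lk] unfolding r_def by force
    with in\<Lambda> show ?thesis by simp
  qed
  have P: "(S l \<subseteq> \<Lambda> \<and> card (S l) = l) \<or> \<Lambda> \<subseteq> S l" if "l \<le> k" for l
    using that
  proof (induction l)
    case 0 then show ?case by (simp add: S_def)
  next
    case (Suc l)
    have Sx: "S (Suc l) = insert (idx (Suc l)) (S l)"
      by (simp add: S_def atLeastAtMostSuc_conv)
    from Suc have IH: "(S l \<subseteq> \<Lambda> \<and> card (S l) = l) \<or> \<Lambda> \<subseteq> S l" by simp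
    show ?case
    proof (cases "\<Lambda> \<subseteq> S l")
      case True then show ?thesis using Sx by auto
    next
      case False
      with IH have a: "S l \<subseteq> \<Lambda>" "card (S l) = l" by auto
      have "idx (Suc l) \<in> \<Lambda> - S l" using step[of "Suc l"] Suc.prems a False by simp
      then show ?thesis using Sx a finite_subset[OF a(1) finL] by auto
    qed
  qed
  have sub: "\<Lambda> \<subseteq> S k"
  proof -
    have cardL: "card \<Lambda> \<le> k" using sparse by (simp add: \<Lambda>_def)
    from P[of k] show ?thesis
    proof
      assume a: "S k \<subseteq> \<Lambda> \<and> card (S k) = k"
      then have "S k = \<Lambda>" using card_seteq[OF finL, of "S k"] cardL by simp
      then show ?thesis by simp
    qed simp
  qed
  define e where "e = xs k - x"
  define n where "n = (\<Sum>j\<in>S k. (e $ j)\<^sup>2)"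
  define s where "s = (\<Sum>j\<in>S k. \<bar>e $ j\<bar>)"
  have kk: "k \<le> k" by simp
  have suppe: "\<forall>j. j \<notin> S k \<longrightarrow> e $ j = 0"
    using supp[OF kk] sub unfolding e_def \<Lambda>_def by auto
  have cardS: "card (S k) \<le> k" unfolding S_def using card_image_le[of "{1..k}" idx] by simp
  have normeq: "(norm (xs k - x))\<^sup>2 = n"
  proof -
    have "(norm e)\<^sup>2 = e \<bullet> e" by (simp add: power2_norm_eq_inner)
    also have "\<dots> = (\<Sum>j\<in>UNIV. (e $ j)\<^sup>2)" by (simp add: inner_vec_def power2_eq_square)
    also have "\<dots> = n" unfolding n_def
      by (rule sum.mono_neutral_right) (use suppe in auto)
    finally show ?thesis by (simp add: e_def)
  qed
  have res: "y - D *v xs k = w - D *v e"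
    by (simp add: y_def e_def matrix_vector_mult_diff_distrib)
  have ne: "column i D \<bullet> (D *v e) = column i D \<bullet> w" if "i \<in> S k" for i
    using orth[OF kk that] unfolding res by (simp add: inner_diff_right)
  have Q: "(D *v e) \<bullet> (D *v e) \<le> \<tau> * s"
  proof -
    have "(D *v e) \<bullet> (D *v e) = (\<Sum>i\<in>S k. e $ i * ((D *v e) \<bullet> column i D))"
      by (rule inner_Dv_supp[OF suppe])
    also have "\<dots> = (\<Sum>i\<in>S k. e $ i * (column i D \<bullet> w))"
      by (rule sum.cong) (auto simp: ne inner_commute)
    also have "\<dots> \<le> (\<Sum>i\<in>S k. \<bar>e $ i\<bar> * \<tau>)"
    proof (rule sum_mono)
      fix i
      have "e $ i * (column i D \<bullet> w) \<le> \<bar>e $ i\<bar> * \<bar>column i D \<bullet> w\<bar>"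
        by (metis abs_ge_self abs_mult)
      also have "\<dots> \<le> \<bar>e $ i\<bar> * \<tau>"
        using wsmall by (intro mult_left_mono) (auto simp: less_imp_le)
      finally show "e $ i * (column i D \<bullet> w) \<le> \<bar>e $ i\<bar> * \<tau>" .
    qed
    finally show ?thesis by (simp add: s_def sum_distrib_left mult.commute)
  qed
  have G: "(1 - (real (card (S k)) - 1) * \<mu>) * n \<le> (D *v e) \<bullet> (D *v e)"
    unfolding n_def by (rule gram[OF unit coh mu0 suppe])
  have n0: "0 \<le> n" unfolding n_def by (simp add: sum_nonneg)
  define c where "c = 1 - (real k - 1) * \<mu>"
  have cpos': "c > 0" unfolding c_def using cpos mu0 k1
    by (smt (verit, best) mult_right_mono of_nat_0_le_iff)
  have "c * n \<le> (1 - (real (card (S k)) - 1) * \<mu>) * n"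
    unfolding c_def using cardS mu0 n0
    by (intro mult_right_mono) (auto intro!: mult_right_mono)
  with G Q have cn: "c * n \<le> \<tau> * s" by linarith
  have ss: "s * s \<le> real k * n"
  proof -
    have "s\<^sup>2 \<le> (\<Sum>j\<in>S k. \<bar>e $ j\<bar>\<^sup>2) * card (S k)"
      unfolding s_def by (rule sum_squared_le_sum_of_squares)
    then have "s * s \<le> n * card (S k)" by (simp add: n_def power2_eq_square)
    also have "\<dots> \<le> n * real k" using cardS n0 by (simp add: mult_left_mono)
    finally show ?thesis by (simp add: mult.commute)
  qed
  have "(c * n) * (c * n) \<le> (\<tau> * s) * (\<tau> * s)"
    using cn cpos' n0 mult_mono[OF cn cn] by auto
  also have "\<dots> = \<tau>\<^sup>2 * (s * s)" by (simp add: power2_eq_square algebra_simps)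
  also have "\<dots> \<le> \<tau>\<^sup>2 * (real k * n)" using ss by (simp add: mult_left_mono)
  finally have "(c\<^sup>2 * n) * n \<le> (real k * \<tau>\<^sup>2) * n" by (simp add: power2_eq_square algebra_simps)
  then have "c\<^sup>2 * n \<le> real k * \<tau>\<^sup>2"
    using n0 by (cases "n = 0") (auto simp: mult_le_cancel_right)
  then have "n \<le> real k * \<tau>\<^sup>2 / c\<^sup>2" using cpos' by (simp add: field_simps)
  then show ?thesis using sub normeq by (simp add: \<Lambda>_def S_def c_def)
qed



lemma num_bound:
  fixes N \<sigma> \<alpha> \<tau> :: real
  assumes N2: "N \<ge> 2" and s: "\<sigma> > 0" and a: "\<alpha> > 1"
    and tau_def: "\<tau> = \<sigma> * sqrt (2 * \<alpha> * ln N)"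
  shows "N * (2 * (\<sigma>\<^sup>2 * normal_density 0 \<sigma> \<tau> / \<tau>))
          < (0.8 / sqrt 2) / (N powr (\<alpha> - 1) * sqrt (\<alpha> * ln N))"
proof -
  have lnN: "ln N > 0" using N2 by simp
  define A where "A = sqrt (\<alpha> * ln N)"
  define P where "P = N powr (\<alpha> - 1)"
  have A0: "A > 0" unfolding A_def using a lnN by simp
  have P0: "P > 0" unfolding P_def using N2 by simp
  have tauA: "\<tau> = \<sigma> * sqrt 2 * A"
    unfolding tau_def A_def by (simp add: real_sqrt_mult mult.assoc)
  have tau2: "\<tau>\<^sup>2 = \<sigma>\<^sup>2 * (2 * \<alpha> * ln N)"
    unfolding tau_def using a lnN by (simp add: power_mult_distrib)
  have ex: "exp (- (\<tau> - 0)\<^sup>2 / (2 * \<sigma>\<^sup>2)) = N powr (- \<alpha>)"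
  proof -
    have "- (\<tau> - 0)\<^sup>2 / (2 * \<sigma>\<^sup>2) = - \<alpha> * ln N" using s by (simp add: tau2)
    then show ?thesis using N2 by (simp add: powr_def)
  qed
  have sq: "sqrt (2 * pi * \<sigma>\<^sup>2) = sqrt 2 * sqrt pi * \<sigma>"
    using s by (simp add: real_sqrt_mult)
  have NP: "N * N powr (- \<alpha>) = 1 / P"
    unfolding P_def using N2 by (simp add: powr_diff powr_minus field_simps)
  have s2: "sqrt 2 * sqrt 2 = (2::real)" by simp
  have eq: "N * (2 * (\<sigma>\<^sup>2 * normal_density 0 \<sigma> \<tau> / \<tau>)) = 1 / (sqrt pi * P * A)"
  proof -
    have "N * (2 * (\<sigma>\<^sup>2 * normal_density 0 \<sigma> \<tau> / \<tau>))
        = (N * N powr (- \<alpha>)) * (2 * \<sigma>\<^sup>2 / (sqrt 2 * sqrt pi * \<sigma> * (\<sigma> * sqrt 2 * A)))"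
      unfolding normal_density_def ex sq by (subst (1) tauA) (simp add: field_simps)
    also have "\<dots> = (1 / P) * (1 / (sqrt pi * A))"
      unfolding NP using s A0 s2 by (simp add: field_simps power2_eq_square)
    finally show ?thesis by simp
  qed
  have pib: "1 / sqrt pi < 0.8 / sqrt 2"
  proof -
    have "3.141592653588 \<le> pi" by (rule pi_approx(1))
    then have "sqrt 2 < 0.8 * sqrt pi"
    proof -
      assume h: "3.141592653588 \<le> pi"
      have "(0.8 * sqrt pi)\<^sup>2 = 0.64 * pi" unfolding power_mult_distrib by (simp add: power2_eq_square)
      then have "(sqrt 2)\<^sup>2 < (0.8 * sqrt pi)\<^sup>2" using h by simp
      then show ?thesis by (rule power_less_imp_less_base) simp
    qed
    then show ?thesis by (simp add: field_simps)
  qed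
  have "1 / (sqrt pi * P * A) = (1 / sqrt pi) / (P * A)" by (simp add: field_simps)
  also have "\<dots> < (0.8 / sqrt 2) / (P * A)"
    using divide_strict_right_mono[OF pib, of "P * A"] P0 A0 by simp
  finally show ?thesis unfolding eq A_def P_def .
qed


theorem mainTheorem6:
  fixes D :: "real^'n^'l" and x :: "real^'n" and k :: nat
    and \<sigma> \<alpha> :: real and M :: "'a measure" and W :: "'a \<Rightarrow> real^'l"
  assumes unit_cols: "\<forall>i. norm (column i D) = 1"
    and LN: "CARD('l) < CARD('n)"
    and indep: "cols_indep_upto D k"
    and x_nz: "x \<noteq> 0"
    and x_sparse: "card {j. x $ j \<noteq> 0} \<le> k"
    and PS: "prob_space M"
    and sigma_pos: "\<sigma> > 0"
    and W_indep: "prob_space.indep_vars M (\<lambda>_. borel) (\<lambda>i \<omega>. W \<omega> $ i) UNIV"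
    and W_normal: "\<forall>i. distributed M lborel (\<lambda>\<omega>. W \<omega> $ i) (normal_density 0 \<sigma>)"
    and alpha: "\<alpha> > 1"
    and cond: "xmin x * (1 - (2 * real k - 1) * coherence D)
                 \<ge> 2 * \<sigma> * sqrt (2 * \<alpha> * ln (real CARD('n)))"
  shows "\<exists>E \<in> sets M.
           measure M E > 1 - (0.8 / sqrt 2) /
              (real CARD('n) powr (\<alpha> - 1) * sqrt (\<alpha> * ln (real CARD('n)))) \<and>
           (\<forall>\<omega>\<in>E. \<forall>idx xs. omp_run D (D *v x + W \<omega>) k idx xs \<longrightarrow>
              {j. x $ j \<noteq> 0} \<subseteq> idx ` {1..k} \<and>
              (norm (xs k - x))\<^sup>2 \<le>
                2 * \<alpha> / (1 - (real k - 1) * coherence D)\<^sup>2 * real k * \<sigma>\<^sup>2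
                  * ln (real CARD('n)))"
proof -
  interpret prob_space M by (rule PS)
  define N where "N = real CARD('n)"
  define \<mu> where "\<mu> = coherence D"
  define \<tau> where "\<tau> = \<sigma> * sqrt (2 * \<alpha> * ln N)"
  define \<Lambda> where "\<Lambda> = {j. x $ j \<noteq> 0}"
  have N2: "N \<ge> 2"
  proof -
    have "0 < CARD('l)" by simp
    then show ?thesis using LN unfolding N_def by linarith
  qed
  have lnN: "ln N > 0" using N2 by simp
  have tau: "\<tau> > 0" unfolding \<tau>_def using sigma_pos alpha lnN by simp
  have tau2: "\<tau>\<^sup>2 = \<sigma>\<^sup>2 * (2 * \<alpha> * ln N)"
    unfolding \<tau>_def using alpha lnN by (simp add: power_mult_distrib)
  have finC: "finite {\<bar>column i D \<bullet> column j D\<bar> | i j. i \<noteq> j}"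
  proof -
    have "{\<bar>column i D \<bullet> column j D\<bar> | i j. i \<noteq> j} \<subseteq> (\<lambda>(i, j). \<bar>column i D \<bullet> column j D\<bar>) ` UNIV"
      by auto
    then show ?thesis by (rule finite_subset) simp
  qed
  have coh: "\<forall>i j. i \<noteq> j \<longrightarrow> \<bar>column i D \<bullet> column j D\<bar> \<le> \<mu>"
    unfolding \<mu>_def coherence_def using finC by (auto intro!: Max_ge)
  have "\<exists>i j::'n. i \<noteq> j"
  proof (rule ccontr)
    assume "\<not> (\<exists>i j::'n. i \<noteq> j)"
    then have "(UNIV :: 'n set) = {undefined}" by auto
    then have "CARD('n) = 1" by (simp add: card_1_singleton_iff) blast
    then show False using N2 unfolding N_def by simp
  qed
  then obtain i1 i2 :: 'n where "i1 \<noteq> i2" by blast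
  then have mu0: "0 \<le> \<mu>" using coh by (meson abs_ge_zero order_trans)
  have finL: "finite \<Lambda>" by simp
  have LNE: "\<Lambda> \<noteq> {}" using x_nz unfolding \<Lambda>_def by (auto simp: vec_eq_iff)
  have xset: "{\<bar>x $ j\<bar> | j. x $ j \<noteq> 0} = (\<lambda>j. \<bar>x $ j\<bar>) ` \<Lambda>" unfolding \<Lambda>_def by auto
  have xm: "\<forall>j. x $ j \<noteq> 0 \<longrightarrow> xmin x \<le> \<bar>x $ j\<bar>"
    unfolding xmin_def xset using finL by (auto simp: \<Lambda>_def intro!: Min_le)
  have xm0: "xmin x > 0"
  proof -
    have "xmin x \<in> (\<lambda>j. \<bar>x $ j\<bar>) ` \<Lambda>" unfolding xmin_def xset using finL LNE by (intro Min_in) auto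
    then show ?thesis unfolding \<Lambda>_def by auto
  qed
  have k1: "1 \<le> k"
  proof -
    have "0 < card \<Lambda>" using finL LNE by (simp add: card_gt_0_iff)
    then show ?thesis using x_sparse unfolding \<Lambda>_def by simp
  qed
  have cond': "xmin x * (1 - (2 * real k - 1) * \<mu>) \<ge> 2 * \<tau>"
    using cond unfolding \<mu>_def \<tau>_def N_def by (simp add: mult.assoc)
  have cpos: "1 - (2 * real k - 1) * \<mu> > 0"
  proof (rule ccontr)
    assume "\<not> ?thesis"
    then have "xmin x * (1 - (2 * real k - 1) * \<mu>) \<le> 0" using xm0 by (simp add: mult_nonneg_nonpos)
    then show False using cond' tau by linarith
  qed
  define Z where "Z = (\<lambda>i \<omega>. column i D \<bullet> W \<omega>)"
  have Zd: "distributed M lborel (Z i) (normal_density 0 \<sigma>)" for i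
    unfolding Z_def by (rule inner_normal[OF PS sigma_pos W_indep W_normal unit_cols[rule_format]])
  have Zm[measurable]: "Z i \<in> borel_measurable M" for i
    using distributed_measurable[OF Zd[of i]] by simp
  define A where "A = (\<lambda>i. {\<omega> \<in> space M. \<tau> \<le> \<bar>Z i \<omega>\<bar>})"
  have Am: "A i \<in> sets M" for i unfolding A_def by measurable
  define p where "p = 2 * (\<sigma>\<^sup>2 * normal_density 0 \<sigma> \<tau> / \<tau>)"
  have p0: "0 \<le> p" unfolding p_def using tau by simp
  have Ap: "measure M (A i) \<le> p" for i
  proof -
    have bs: "{x::real. \<tau> \<le> \<bar>x\<bar>} \<in> sets lborel" by measurable
    have "emeasure M (A i) = emeasure M (Z i -` {x. \<tau> \<le> \<bar>x\<bar>} \<inter> space M)"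
      unfolding A_def by (rule arg_cong[where f="emeasure M"]) auto
    also have "\<dots> = (\<integral>\<^sup>+x. ennreal (normal_density 0 \<sigma> x) * indicator {x. \<tau> \<le> \<bar>x\<bar>} x \<partial>lborel)"
      by (rule distributed_emeasure[OF Zd bs])
    also have "\<dots> \<le> ennreal p" unfolding p_def by (rule gauss_tail[OF sigma_pos tau])
    finally show ?thesis using p0 by (simp add: emeasure_eq_measure)
  qed
  define U where "U = (\<Union>i\<in>UNIV. A i)"
  have Um: "U \<in> sets M" unfolding U_def using Am by auto
  have "measure M U \<le> (\<Sum>i\<in>UNIV. measure M (A i))"
    unfolding U_def by (rule finite_measure_subadditive_finite) (use Am in auto)
  also have "\<dots> \<le> of_nat (card (UNIV :: 'n set)) * p"
    by (rule sum_bounded_above) (rule Ap)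
  finally have UN: "measure M U \<le> N * p" unfolding N_def by simp
  define E where "E = space M - U"
  have Em: "E \<in> sets M" unfolding E_def using Um by auto
  have "measure M E = 1 - measure M U" unfolding E_def by (rule prob_compl[OF Um])
  moreover have "N * p < (0.8 / sqrt 2) / (N powr (\<alpha> - 1) * sqrt (\<alpha> * ln N))"
    unfolding p_def by (rule num_bound[OF N2 sigma_pos alpha \<tau>_def])
  ultimately have meas: "measure M E > 1 - (0.8 / sqrt 2) / (N powr (\<alpha> - 1) * sqrt (\<alpha> * ln N))"
    using UN by linarith
  have good: "\<forall>i. \<bar>column i D \<bullet> W \<omega>\<bar> < \<tau>" if "\<omega> \<in> E" for \<omega>
    using that unfolding E_def U_def A_def Z_def by (auto simp: not_le)
  have c1pos: "1 - (real k - 1) * \<mu> > 0"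
    using cpos mu0 k1 by (smt (verit, best) mult_right_mono of_nat_0_le_iff)
  show ?thesis
  proof (intro bexI[OF _ Em] conjI ballI allI impI)
    show "measure M E > 1 - (0.8 / sqrt 2) /
              (real CARD('n) powr (\<alpha> - 1) * sqrt (\<alpha> * ln (real CARD('n))))"
      using meas unfolding N_def .
  next
    fix \<omega> idx xs assume \<omega>: "\<omega> \<in> E" and run: "omp_run D (D *v x + W \<omega>) k idx xs"
    have R: "{j. x $ j \<noteq> 0} \<subseteq> idx ` {1..k} \<and>
         (norm (xs k - x))\<^sup>2 \<le> real k * \<tau>\<^sup>2 / (1 - (real k - 1) * \<mu>)\<^sup>2"
      by (rule omp_det[OF unit_cols coh mu0 k1 cpos x_sparse xm tau good[OF \<omega>] cond' run])
    have eqf: "real k * \<tau>\<^sup>2 / (1 - (real k - 1) * \<mu>)\<^sup>2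
        = 2 * \<alpha> / (1 - (real k - 1) * \<mu>)\<^sup>2 * real k * \<sigma>\<^sup>2 * ln N"
      unfolding tau2 using c1pos by (simp add: field_simps)
    show "{j. x $ j \<noteq> 0} \<subseteq> idx ` {1..k}" using R by simp
    show "(norm (xs k - x))\<^sup>2 \<le>
                2 * \<alpha> / (1 - (real k - 1) * coherence D)\<^sup>2 * real k * \<sigma>\<^sup>2
                  * ln (real CARD('n))"
      using R eqf unfolding \<mu>_def N_def by simp
  qed
qed

end
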